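(* Let $G$ be a connected graph with at least 3 vertices. Then: (a) for every automorphism $\alpha$ of $G$, $|\alpha|_t=|\alpha|+|\alpha|_e$; (b) $\theta''(G)\le \theta(G)+\theta'(G)-1$; (c) $\theta''(G)\le |V(G)|+|E(G)|-1$, with equality when $G\cong K_{1,n}$ for $n\ge 2$.
   Context: All graphs are finite and simple. For an automorphism $\alpha$ (acting on edges by $\alpha(uv)=\alpha(u)\alpha(v)$): - $|\alpha|$ is the number of cycles, including fixed points, of $\alpha$ on $V(G)$; - $|\alpha|_e$ is the number of cycles of $\alpha$ on $E(G)$; - $|\alpha|_t$ is the number of cycles of $\alpha$ acting on $V(G)\cup E(G)$. A vertex, edge, or total coloring with $k$ colors is a surjective map from $V(G)$, $E(G)$, or $V(G)\cup E(G)$ respectively onto $\{1,\dots,k\}$. It is distinguishing if only the identity automorphism preserves all colors. $\theta(G)$, $\theta'(G)$, $\theta''(G)$ denote the least $k$ such that every vertex, edge, or total coloring, respectively, using exactly $k$ colors is distinguishing. *)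

theory Defs
  imports Main
begin

definition simple_graph :: "'a set \<Rightarrow> 'a set set \<Rightarrow> bool" where
  "simple_graph V E \<longleftrightarrow> finite V \<and>
     (\<forall>e\<in>E. \<exists>u v. u \<in> V \<and> v \<in> V \<and> u \<noteq> v \<and> e = {u, v})"

definition connected_graph :: "'a set \<Rightarrow> 'a set set \<Rightarrow> bool" where
  "connected_graph V E \<longleftrightarrow>
     (\<forall>u\<in>V. \<forall>v\<in>V. (\<lambda>x y. {x, y} \<in> E)\<^sup>*\<^sup>* u v)"

definition automorphism :: "'a set \<Rightarrow> 'a set set \<Rightarrow> ('a \<Rightarrow> 'a) \<Rightarrow> bool" where
  "automorphism V E \<alpha> \<longleftrightarrow> bij_betw \<alpha> V V \<and> (\<forall>x. x \<notin> V \<longrightarrow> \<alpha> x = x) \<and>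
     (\<forall>u\<in>V. \<forall>v\<in>V. {\<alpha> u, \<alpha> v} \<in> E \<longleftrightarrow> {u, v} \<in> E)"

definition num_cycles :: "('b \<Rightarrow> 'b) \<Rightarrow> 'b set \<Rightarrow> nat" where
  "num_cycles f S = card ((\<lambda>x. {(f ^^ n) x | n. True}) ` S)"

definition edge_act :: "('a \<Rightarrow> 'a) \<Rightarrow> 'a set \<Rightarrow> 'a set" where
  "edge_act \<alpha> e = \<alpha> ` e"

(* action on V(G) \<union> E(G), realised as the disjoint union 'a + 'a set *)
fun total_act :: "('a \<Rightarrow> 'a) \<Rightarrow> 'a + 'a set \<Rightarrow> 'a + 'a set" where
  "total_act \<alpha> (Inl v) = Inl (\<alpha> v)"
| "total_act \<alpha> (Inr e) = Inr (\<alpha> ` e)"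

definition total_set :: "'a set \<Rightarrow> 'a set set \<Rightarrow> ('a + 'a set) set" where
  "total_set V E = Inl ` V \<union> Inr ` E"

definition vcycles :: "'a set \<Rightarrow> ('a \<Rightarrow> 'a) \<Rightarrow> nat" where
  "vcycles V \<alpha> = num_cycles \<alpha> V"

definition ecycles :: "'a set set \<Rightarrow> ('a \<Rightarrow> 'a) \<Rightarrow> nat" where
  "ecycles E \<alpha> = num_cycles (edge_act \<alpha>) E"

definition tcycles :: "'a set \<Rightarrow> 'a set set \<Rightarrow> ('a \<Rightarrow> 'a) \<Rightarrow> nat" where
  "tcycles V E \<alpha> = num_cycles (total_act \<alpha>) (total_set V E)"

definition coloring_with :: "'x set \<Rightarrow> ('x \<Rightarrow> nat) \<Rightarrow> nat \<Rightarrow> bool" where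
  "coloring_with X c k \<longleftrightarrow> c ` X = {1..k}"

definition distinguishing ::
  "'a set \<Rightarrow> 'a set set \<Rightarrow> (('a \<Rightarrow> 'a) \<Rightarrow> 'x \<Rightarrow> 'x) \<Rightarrow> 'x set \<Rightarrow> ('x \<Rightarrow> nat) \<Rightarrow> bool" where
  "distinguishing V E act X c \<longleftrightarrow>
     (\<forall>\<alpha>. automorphism V E \<alpha> \<longrightarrow> (\<forall>x\<in>X. c (act \<alpha> x) = c x) \<longrightarrow> (\<forall>v\<in>V. \<alpha> v = v))"

definition theta_gen ::
  "'a set \<Rightarrow> 'a set set \<Rightarrow> (('a \<Rightarrow> 'a) \<Rightarrow> 'x \<Rightarrow> 'x) \<Rightarrow> 'x set \<Rightarrow> nat" where
  "theta_gen V E act X = (LEAST k. k \<ge> 1 \<and>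
     (\<forall>c. coloring_with X c k \<longrightarrow> distinguishing V E act X c))"

definition theta_v :: "'a set \<Rightarrow> 'a set set \<Rightarrow> nat" where
  "theta_v V E = theta_gen V E (\<lambda>\<alpha>. \<alpha>) V"

definition theta_e :: "'a set \<Rightarrow> 'a set set \<Rightarrow> nat" where
  "theta_e V E = theta_gen V E edge_act E"

definition theta_t :: "'a set \<Rightarrow> 'a set set \<Rightarrow> nat" where
  "theta_t V E = theta_gen V E total_act (total_set V E)"

definition is_star :: "'a set \<Rightarrow> 'a set set \<Rightarrow> bool" where
  "is_star V E \<longleftrightarrow> card V \<ge> 3 \<and>
     (\<exists>z\<in>V. E = {{z, v} | v. v \<in> V \<and> v \<noteq> z})"

end

theory Submission
  imports Defs
begin

definition Pk :: "'a set \<Rightarrow> 'a set set \<Rightarrow> (('a \<Rightarrow> 'a) \<Rightarrow> 'x \<Rightarrow> 'x) \<Rightarrow> 'x set \<Rightarrow> nat \<Rightarrow> bool" where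
 "Pk V E act X k \<longleftrightarrow> (\<forall>c. coloring_with X c k \<longrightarrow> distinguishing V E act X c)"

lemma theta_gen_Pk: "theta_gen V E act X = (LEAST k. k \<ge> 1 \<and> Pk V E act X k)"
  unfolding theta_gen_def Pk_def by simp

lemma Pk_big: assumes "finite X" "k > card X" shows "Pk V E act X k"
  unfolding Pk_def coloring_with_def
proof (intro allI impI)
  fix c assume "c ` X = {1..k}"
  hence "card (c ` X) = k" by simp
  moreover have "card (c ` X) \<le> card X" by (rule card_image_le[OF assms(1)])
  ultimately show "distinguishing V E act X c" using assms(2) by simp
qed

lemma theta_prop: assumes "finite X"
  shows "theta_gen V E act X \<ge> 1 \<and> Pk V E act X (theta_gen V E act X)"
  unfolding theta_gen_Pk
  by (rule LeastI[of _ "Suc (card X)"]) (use Pk_big[OF assms] in auto)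

lemma theta_le: "1 \<le> k \<Longrightarrow> Pk V E act X k \<Longrightarrow> theta_gen V E act X \<le> k"
  unfolding theta_gen_Pk by (rule Least_le) simp

lemma theta_ge: assumes "finite X" "\<And>k. 1 \<le> k \<Longrightarrow> k < m \<Longrightarrow> \<not> Pk V E act X k"
  shows "m \<le> theta_gen V E act X"
  using theta_prop[OF assms(1), of V E act] assms(2) by (meson not_less)

lemma min_image: "1 \<le> k \<Longrightarrow> k \<le> m \<Longrightarrow> (\<lambda>i. min i k) ` {1..m} = {(1::nat)..k}"
proof
  assume "1 \<le> k" "k \<le> m"
  show "(\<lambda>i. min i k) ` {1..m} \<subseteq> {1..k}" using \<open>1 \<le> k\<close> by auto
  show "{1..k} \<subseteq> (\<lambda>i. min i k) ` {1..m}"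
  proof
    fix x assume "x \<in> {(1::nat)..k}"
    hence "x = min x k" "x \<in> {1..m}" using \<open>k \<le> m\<close> by auto
    thus "x \<in> (\<lambda>i. min i k) ` {1..m}" by blast
  qed
qed

lemma Pk_mono: assumes "Pk V E act X k" "1 \<le> k" "k \<le> m" shows "Pk V E act X m"
  unfolding Pk_def
proof (intro allI impI)
  fix c assume c: "coloring_with X c m"
  let ?c = "\<lambda>x. min (c x) k"
  have "?c ` X = (\<lambda>i. min i k) ` (c ` X)" by (simp add: image_image)
  also have "\<dots> = {1..k}" using c min_image[OF assms(2,3)] unfolding coloring_with_def by simp
  finally have "distinguishing V E act X ?c" using assms(1) unfolding Pk_def coloring_with_def by blast
  thus "distinguishing V E act X c" unfolding distinguishing_def by auto
qed

lemma relabel: assumes "finite S" shows "\<exists>f::'b \<Rightarrow> nat. f ` S = {1..card S}"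
proof -
  obtain h where h: "bij_betw h S {0..<card S}" using ex_bij_betw_finite_nat[OF assms] by blast
  have "(Suc \<circ> h) ` S = Suc ` (h ` S)" by (simp add: image_comp)
  also have "\<dots> = Suc ` {0..<card S}" using h by (simp add: bij_betw_def)
  also have "\<dots> = {1..card S}" by (simp add: image_Suc_atLeastLessThan atLeastLessThanSuc_atLeastAtMost)
  finally show ?thesis by blast
qed

lemma iter_Inl: "(total_act \<alpha> ^^ n) (Inl v) = Inl ((\<alpha> ^^ n) v)"
  by (induction n) auto

lemma iter_Inr: "(total_act \<alpha> ^^ n) (Inr e) = Inr ((edge_act \<alpha> ^^ n) e)"
  by (induction n) (auto simp: edge_act_def)

lemma finE: "simple_graph V E \<Longrightarrow> finite E"
proof -
  assume a: "simple_graph V E"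
  hence "E \<subseteq> Pow V" unfolding simple_graph_def by fastforce
  thus "finite E" using a unfolding simple_graph_def by (meson finite_Pow_iff rev_finite_subset)
qed

lemma card_total: "finite V \<Longrightarrow> finite E \<Longrightarrow> card (total_set V E) = card V + card E"
  unfolding total_set_def
  by (subst card_Un_disjoint) (auto simp: card_image)

lemma part_a:
  assumes "finite V" "finite E"
  shows "tcycles V E \<alpha> = vcycles V \<alpha> + ecycles E \<alpha>"
proof -
  define O1 where "O1 = (\<lambda>x. {(\<alpha> ^^ n) x | n. True})"
  define O2 where "O2 = (\<lambda>x. {(edge_act \<alpha> ^^ n) x | n. True})"
  have i1: "inj (image (Inl :: 'a \<Rightarrow> 'a + 'a set))" by (simp add: inj_def inj_image_eq_iff)
  have i2: "inj (image (Inr :: 'a set \<Rightarrow> 'a + 'a set))" by (simp add: inj_def inj_image_eq_iff)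
  have r: "\<And>g. {g n | n. True} = range g" by auto
  have oL: "{(total_act \<alpha> ^^ n) (Inl v) | n. True} = Inl ` O1 v" for v
    unfolding O1_def r by (simp add: iter_Inl image_comp comp_def)
  have oR: "{(total_act \<alpha> ^^ n) (Inr e) | n. True} = Inr ` O2 e" for e
    unfolding O2_def r by (simp add: iter_Inr image_comp comp_def)
  have eq: "(\<lambda>x. {(total_act \<alpha> ^^ n) x | n. True}) ` total_set V E
      = image Inl ` (O1 ` V) \<union> image Inr ` (O2 ` E)"
    unfolding total_set_def image_Un image_comp comp_def oL oR by simp
  have ne: "O1 x \<noteq> {}" for x unfolding O1_def by blast
  have dis: "image Inl ` (O1 ` V) \<inter> image Inr ` (O2 ` E) = {}"
  proof (rule ccontr)
    assume "image Inl ` (O1 ` V) \<inter> image Inr ` (O2 ` E) \<noteq> {}"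
    then obtain x y where "Inl ` O1 x = Inr ` O2 y" by blast
    moreover obtain z where "z \<in> O1 x" using ne by blast
    ultimately have "Inl z \<in> Inr ` O2 y" by blast
    thus False by blast
  qed
  have c1: "card (image (Inl :: 'a \<Rightarrow> 'a + 'a set) ` (O1 ` V)) = card (O1 ` V)"
    by (rule card_image, rule inj_on_subset[OF i1], rule subset_UNIV)
  have c2: "card (image (Inr :: 'a set \<Rightarrow> 'a + 'a set) ` (O2 ` E)) = card (O2 ` E)"
    by (rule card_image, rule inj_on_subset[OF i2], rule subset_UNIV)
  have "tcycles V E \<alpha> = card (image Inl ` (O1 ` V) \<union> image Inr ` (O2 ` E))"
    unfolding tcycles_def num_cycles_def eq ..
  also have "\<dots> = card (image (Inl :: 'a \<Rightarrow> 'a + 'a set) ` (O1 ` V)) + card (image (Inr :: 'a set \<Rightarrow> 'a + 'a set) ` (O2 ` E))"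
    by (rule card_Un_disjoint) (use assms dis in auto)
  also have "\<dots> = vcycles V \<alpha> + ecycles E \<alpha>"
    unfolding c1 c2 by (simp add: vcycles_def ecycles_def num_cycles_def O1_def O2_def)
  finally show ?thesis .
qed

lemma crossing: "R\<^sup>*\<^sup>* a b \<Longrightarrow> a \<in> S \<Longrightarrow> b \<notin> S \<Longrightarrow> \<exists>p q. R p q \<and> p \<in> S \<and> q \<notin> S"
  by (induction rule: rtranclp.induct) auto

lemma edge_in_V: "simple_graph V E \<Longrightarrow> {a, b} \<in> E \<Longrightarrow> a \<in> V \<and> b \<in> V \<and> a \<noteq> b"
  unfolding simple_graph_def by (fastforce simp: doubleton_eq_iff)

lemma edge_moved:
  assumes G: "simple_graph V E" and C: "connected_graph V E" and "card V \<ge> 3"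
    and A: "automorphism V E \<alpha>" and v: "v \<in> V" "\<alpha> v \<noteq> v"
  shows "\<exists>e\<in>E. \<alpha> ` e \<noteq> e"
proof (rule ccontr)
  assume nt: "\<not> (\<exists>e\<in>E. \<alpha> ` e \<noteq> e)"
  have allf: "\<forall>e\<in>E. \<alpha> ` e = e" using nt by simp
  have fixd: "{\<alpha> a, \<alpha> b} = {a, b}" if "{a, b} \<in> E" for a b
  proof -
    have "\<alpha> ` {a, b} = {a, b}" using bspec[OF allf that] .
    thus ?thesis by simp
  qed
  have "card V \<ge> 2" using assms(3) by simp
  have fV: "finite V" using G unfolding simple_graph_def by simp
  obtain u where u: "u \<in> V" "u \<noteq> v"
  proof -
    have "V - {v} \<noteq> {}"
    proof
      assume "V - {v} = {}"
      hence "V \<subseteq> {v}" by blast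
      hence "card V \<le> card {v}" using fV by (intro card_mono) auto
      thus False using \<open>card V \<ge> 2\<close> by simp
    qed
    then obtain u where uu: "u \<in> V - {v}" by blast
    show ?thesis using that[of u] uu by simp
  qed
  have p1: "(\<lambda>x y. {x, y} \<in> E)\<^sup>*\<^sup>* v u" using C u v(1) unfolding connected_graph_def by simp
  obtain p q where pq: "{p, q} \<in> E" "p \<in> {v}" "q \<notin> {v}"
    using crossing[OF p1, of "{v}"] u(2) by auto
  hence x: "{v, q} \<in> E" "q \<noteq> v" by auto
  hence xV: "q \<in> V" using edge_in_V[OF G] by blast
  have "{\<alpha> v, \<alpha> q} = {v, q}" using fixd[OF x(1)] .
  hence ax: "\<alpha> v = q" "\<alpha> q = v" using v(2) by (simp_all add: doubleton_eq_iff)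
  have "card {v, q} = 2" using x by simp
  have "V - {v, q} \<noteq> {}"
  proof
    assume "V - {v, q} = {}"
    hence "V \<subseteq> {v, q}" by blast
    hence "card V \<le> card {v, q}" using fV by (intro card_mono) auto
    thus False using \<open>card {v, q} = 2\<close> assms(3) by simp
  qed
  then obtain y where y: "y \<in> V" "y \<notin> {v, q}" by blast
  have p2: "(\<lambda>x y. {x, y} \<in> E)\<^sup>*\<^sup>* v y" using C y(1) v(1) unfolding connected_graph_def by simp
  obtain a b where ab: "{a, b} \<in> E" "a \<in> {v, q}" "b \<notin> {v, q}"
    using crossing[OF p2, of "{v, q}"] y(2) by auto
  have e: "{\<alpha> a, \<alpha> b} = {a, b}" using fixd[OF ab(1)] .
  have "a = v \<or> a = q" using ab(2) by simp
  thus False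
  proof
    assume "a = v"
    thus False using e ax ab(3) x(2) by (simp add: doubleton_eq_iff)
  next
    assume "a = q"
    thus False using e ax ab(3) x(2) by (simp add: doubleton_eq_iff)
  qed
qed


lemma collision:
  assumes "finite X" "p \<in> X" "q \<in> X" "r \<in> X" "r' \<in> X" "p \<noteq> q" "r \<noteq> r'" "r \<notin> {p, q}"
    "c p = c q" "c r = c r'"
  shows "card (c ` X) + 2 \<le> card X"
proof -
  have sub: "c ` X \<subseteq> c ` (X - {q, r})"
  proof
    fix y assume "y \<in> c ` X"
    then obtain x where x: "x \<in> X" "y = c x" by blast
    show "y \<in> c ` (X - {q, r})"
    proof (cases "x = q")
      case True then show ?thesis using x assms by (intro image_eqI[of _ _ p]) auto
    next
      case False
      show ?thesis
      proof (cases "x = r")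
        case True
        show ?thesis
        proof (cases "r' = q")
          case True thus ?thesis using x \<open>x = r\<close> assms by (intro image_eqI[of _ _ p]) auto
        next
          case False thus ?thesis using x \<open>x = r\<close> assms by (intro image_eqI[of _ _ r']) auto
        qed
      next
        case False thus ?thesis using x \<open>x \<noteq> q\<close> by auto
      qed
    qed
  qed
  have qr: "q \<noteq> r" using assms(8) by auto
  have c2: "card {q, r} = 2" using qr by simp
  have "card {q, r} \<le> card X" by (rule card_mono) (use assms in auto)
  hence X2: "card X \<ge> 2" using c2 by simp
  have "card (c ` X) \<le> card (c ` (X - {q, r}))" by (rule card_mono) (use assms sub in auto)
  also have "\<dots> \<le> card (X - {q, r})" by (rule card_image_le) (use assms in auto)
  also have "\<dots> = card X - 2" using assms c2 by (subst card_Diff_subset) auto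
  finally show ?thesis using X2 by simp
qed

lemma auto_edge: "simple_graph V E \<Longrightarrow> automorphism V E \<alpha> \<Longrightarrow> e \<in> E \<Longrightarrow> \<alpha> ` e \<in> E"
proof -
  assume G: "simple_graph V E" and A: "automorphism V E \<alpha>" and e: "e \<in> E"
  obtain a b where ab: "a \<in> V" "b \<in> V" "e = {a, b}" using G e unfolding simple_graph_def by blast
  thus ?thesis using A e unfolding automorphism_def by simp
qed

lemma auto_vertex: "automorphism V E \<alpha> \<Longrightarrow> v \<in> V \<Longrightarrow> \<alpha> v \<in> V"
  unfolding automorphism_def bij_betw_def by blast

lemma finX: "simple_graph V E \<Longrightarrow> finite (total_set V E)"
  using finE[of V E] unfolding total_set_def simple_graph_def by simp

lemma part_c_upper:
  assumes G: "simple_graph V E" and C: "connected_graph V E" and c3: "card V \<ge> 3"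
  shows "theta_t V E \<le> card V + card E - 1"
proof -
  let ?X = "total_set V E"
  have fV: "finite V" using G unfolding simple_graph_def by simp
  have fE: "finite E" using finE[OF G] .
  have fX: "finite ?X" using finX[OF G] .
  have cX: "card ?X = card V + card E" using card_total[OF fV fE] .
  have pk: "Pk V E total_act ?X (card ?X - 1)"
    unfolding Pk_def coloring_with_def distinguishing_def
  proof (intro allI impI ballI)
    fix c \<alpha> v assume cc: "c ` ?X = {1..card ?X - 1}" and A: "automorphism V E \<alpha>"
      and pres: "\<forall>x\<in>?X. c (total_act \<alpha> x) = c x" and v: "v \<in> V"
    show "\<alpha> v = v"
    proof (rule ccontr)
      assume nv: "\<alpha> v \<noteq> v"
      obtain e where e: "e \<in> E" "\<alpha> ` e \<noteq> e" using edge_moved[OF G C c3 A v nv] by blast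
      have avV: "\<alpha> v \<in> V" using auto_vertex[OF A v] .
      have aeE: "\<alpha> ` e \<in> E" using auto_edge[OF G A e(1)] .
      have m1: "Inl v \<in> ?X" "Inl (\<alpha> v) \<in> ?X" "Inr e \<in> ?X" "Inr (\<alpha> ` e) \<in> ?X"
        using v avV e aeE unfolding total_set_def by auto
      have e1: "c (Inl v) = c (Inl (\<alpha> v))" using bspec[OF pres m1(1)] by (metis total_act.simps(1))
      have e2: "c (Inr e) = c (Inr (\<alpha> ` e))" using bspec[OF pres m1(3)] by (metis total_act.simps(2))
      have "card (c ` ?X) + 2 \<le> card ?X"
        by (rule collision[OF fX m1 _ _ _ e1 e2]) (use nv e in auto)
      thus False using cc by simp
    qed
  qed
  have "1 \<le> card ?X - 1" using cX c3 by simp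
  hence "theta_gen V E total_act ?X \<le> card ?X - 1" using theta_le pk by blast
  thus ?thesis unfolding theta_t_def cX .
qed

lemma part_b:
  assumes G: "simple_graph V E"
  shows "theta_t V E \<le> theta_v V E + theta_e V E - 1"
proof -
  let ?X = "total_set V E"
  have fV: "finite V" using G unfolding simple_graph_def by simp
  have fE: "finite E" using finE[OF G] .
  have fX: "finite ?X" using finX[OF G] .
  have hv: "theta_v V E \<ge> 1 \<and> Pk V E (\<lambda>\<alpha>. \<alpha>) V (theta_v V E)"
    unfolding theta_v_def by (rule theta_prop[OF fV])
  have he: "theta_e V E \<ge> 1 \<and> Pk V E edge_act E (theta_e V E)"
    unfolding theta_e_def by (rule theta_prop[OF fE])
  let ?k = "theta_v V E + theta_e V E - 1"
  have pk: "Pk V E total_act ?X ?k"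
    unfolding Pk_def
  proof (intro allI impI)
    fix c assume cc: "coloring_with ?X c ?k"
    define CA where "CA = (\<lambda>v. c (Inl v)) ` V"
    define CB where "CB = (\<lambda>e. c (Inr e)) ` E"
    have "c ` ?X = CA \<union> CB" unfolding CA_def CB_def total_set_def image_Un image_comp comp_def ..
    hence AB: "CA \<union> CB = {1..?k}" using cc unfolding coloring_with_def by simp
    have fA: "finite CA" unfolding CA_def using fV by simp
    have fB: "finite CB" unfolding CB_def using fE by simp
    have "?k \<le> card CA + card CB" using card_Un_le[of CA CB] AB by simp
    hence "card CA \<ge> theta_v V E \<or> card CB \<ge> theta_e V E" using hv he by linarith
    thus "distinguishing V E total_act ?X c"
    proof
      assume ca: "card CA \<ge> theta_v V E"
      obtain f where f: "f ` CA = {1..card CA}" using relabel[OF fA] by blast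
      have pa: "Pk V E (\<lambda>\<alpha>. \<alpha>) V (card CA)" using Pk_mono[of V E "\<lambda>\<alpha>. \<alpha>" V "theta_v V E" "card CA"] hv ca by blast
      have "(\<lambda>v. f (c (Inl v))) ` V = f ` CA" unfolding CA_def by (simp add: image_image)
      hence col: "coloring_with V (\<lambda>v. f (c (Inl v))) (card CA)" unfolding coloring_with_def using f by simp
      have dist: "distinguishing V E (\<lambda>\<alpha>. \<alpha>) V (\<lambda>v. f (c (Inl v)))" using pa col unfolding Pk_def by blast
      show "distinguishing V E total_act ?X c" unfolding distinguishing_def
      proof (intro allI impI)
        fix \<alpha> assume A: "automorphism V E \<alpha>" and pres: "\<forall>x\<in>?X. c (total_act \<alpha> x) = c x"
        have "\<forall>v\<in>V. f (c (Inl (\<alpha> v))) = f (c (Inl v))"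
        proof
          fix v assume "v \<in> V"
          hence "Inl v \<in> ?X" unfolding total_set_def by simp
          thus "f (c (Inl (\<alpha> v))) = f (c (Inl v))" using pres by force
        qed
        then show "\<forall>v\<in>V. \<alpha> v = v" using dist A unfolding distinguishing_def by blast
      qed
    next
      assume cb: "card CB \<ge> theta_e V E"
      obtain f where f: "f ` CB = {1..card CB}" using relabel[OF fB] by blast
      have pb: "Pk V E edge_act E (card CB)" using Pk_mono[of V E edge_act E "theta_e V E" "card CB"] he cb by blast
      have "(\<lambda>e. f (c (Inr e))) ` E = f ` CB" unfolding CB_def by (simp add: image_image)
      hence col: "coloring_with E (\<lambda>e. f (c (Inr e))) (card CB)" unfolding coloring_with_def using f by simp
      have dist: "distinguishing V E edge_act E (\<lambda>e. f (c (Inr e)))" using pb col unfolding Pk_def by blast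
      show "distinguishing V E total_act ?X c" unfolding distinguishing_def
      proof (intro allI impI)
        fix \<alpha> assume A: "automorphism V E \<alpha>" and pres: "\<forall>x\<in>?X. c (total_act \<alpha> x) = c x"
        have "\<forall>e\<in>E. f (c (Inr (edge_act \<alpha> e))) = f (c (Inr e))"
        proof
          fix e assume "e \<in> E"
          hence "Inr e \<in> ?X" unfolding total_set_def by simp
          thus "f (c (Inr (edge_act \<alpha> e))) = f (c (Inr e))" using pres by (force simp: edge_act_def)
        qed
        then show "\<forall>v\<in>V. \<alpha> v = v" using dist A unfolding distinguishing_def by blast
      qed
    qed
  qed
  have "1 \<le> ?k" using hv he by linarith
  hence "theta_gen V E total_act ?X \<le> ?k" using theta_le pk by blast
  thus ?thesis unfolding theta_t_def .
qed


lemma star_lower: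
  assumes G: "simple_graph V E" and S: "is_star V E"
  shows "card V + card E - 1 \<le> theta_t V E"
proof -
  from S obtain z where z: "z \<in> V" and Ez: "E = {{z, v} | v. v \<in> V \<and> v \<noteq> z}"
    and c3: "card V \<ge> 3" unfolding is_star_def by blast
  have fV: "finite V" using G unfolding simple_graph_def by simp
  have fE: "finite E" using finE[OF G] .
  let ?X = "total_set V E"
  have fX: "finite ?X" using finX[OF G] .
  have cX: "card ?X = card V + card E" using card_total[OF fV fE] .
  have "V - {z} \<noteq> {}"
  proof
    assume "V - {z} = {}"
    hence "V \<subseteq> {z}" by blast
    hence "card V \<le> card {z}" using fV by (intro card_mono) auto
    thus False using c3 by simp
  qed
  then obtain u where u: "u \<in> V" "u \<noteq> z" by blast
  have "V - {z, u} \<noteq> {}"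
  proof
    assume "V - {z, u} = {}"
    hence "V \<subseteq> {z, u}" by blast
    hence "card V \<le> card {z, u}" using fV by (intro card_mono) auto
    also have "\<dots> \<le> 2" by (rule card_insert_le_m1) auto
    finally show False using c3 by simp
  qed
  then obtain w where w: "w \<in> V" "w \<noteq> z" "w \<noteq> u" by blast
  have memE: "{a, b} \<in> E \<longleftrightarrow> (a = z \<and> b \<noteq> z \<or> b = z \<and> a \<noteq> z)" if "a \<in> V" "b \<in> V" for a b
  proof
    assume "{a, b} \<in> E"
    then obtain t where "{a, b} = {z, t}" "t \<noteq> z" unfolding Ez by blast
    thus "a = z \<and> b \<noteq> z \<or> b = z \<and> a \<noteq> z" by (auto simp: doubleton_eq_iff)
  next
    assume "a = z \<and> b \<noteq> z \<or> b = z \<and> a \<noteq> z"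
    thus "{a, b} \<in> E"
    proof
      assume h: "a = z \<and> b \<noteq> z"
      show "{a, b} \<in> E" unfolding Ez using h that by blast
    next
      assume h: "b = z \<and> a \<noteq> z"
      have "{a, b} = {z, a}" using h by auto
      thus "{a, b} \<in> E" unfolding Ez using h that by blast
    qed
  qed
  define \<alpha> where "\<alpha> = (\<lambda>x. if x = u then w else if x = w then u else x)"
  have \<alpha>\<alpha>: "\<alpha> (\<alpha> x) = x" for x using w by (auto simp: \<alpha>_def)
  have \<alpha>V: "x \<in> V \<Longrightarrow> \<alpha> x \<in> V" for x using u w by (auto simp: \<alpha>_def)
  have \<alpha>z: "\<alpha> x = z \<longleftrightarrow> x = z" for x using u w by (auto simp: \<alpha>_def)
  have A: "automorphism V E \<alpha>"
    unfolding automorphism_def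
  proof (intro conjI allI impI ballI)
    show "bij_betw \<alpha> V V" by (rule bij_betw_byWitness[where f'=\<alpha>]) (use \<alpha>\<alpha> \<alpha>V in auto)
  next
    fix x assume "x \<notin> V" thus "\<alpha> x = x" using u w by (auto simp: \<alpha>_def)
  next
    fix a b assume ab: "a \<in> V" "b \<in> V"
    show "{\<alpha> a, \<alpha> b} \<in> E \<longleftrightarrow> {a, b} \<in> E"
      using memE[OF \<alpha>V[OF ab(1)] \<alpha>V[OF ab(2)]] memE[OF ab] \<alpha>z by simp
  qed
  have uE: "{z, u} \<in> E" using memE[OF z u(1)] u by simp
  have wE: "{z, w} \<in> E" using memE[OF z w(1)] w by simp
  have zuw: "{z, u} \<noteq> {z, w}" using u w by (auto simp: doubleton_eq_iff)
  define Y where "Y = ?X - {Inl w, Inr {z, w}}"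
  have fY: "finite Y" unfolding Y_def using fX by simp
  have cY: "card Y = card ?X - 2"
  proof -
    have "{Inl w, Inr {z, w}} \<subseteq> ?X" using w wE unfolding total_set_def by auto
    moreover have "card {Inl w, Inr {z, w} :: 'a + 'a set} = 2" by simp
    ultimately show ?thesis unfolding Y_def using fX by (simp add: card_Diff_subset)
  qed
  obtain h :: "'a + 'a set \<Rightarrow> nat" where h: "h ` Y = {1..card Y}" using relabel[OF fY] by blast
  define r where "r = (\<lambda>x. if x = Inl w then Inl u else if x = Inr {z, w} then Inr {z, u} else (x :: 'a + 'a set))"
  have rY: "r ` ?X = Y"
  proof
    show "r ` ?X \<subseteq> Y"
    proof
      fix y assume "y \<in> r ` ?X"
      then obtain x where x: "x \<in> ?X" "y = r x" by blast
      show "y \<in> Y"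
      proof (cases "x = Inl w")
        case True thus ?thesis using x u w unfolding r_def Y_def total_set_def by auto
      next
        case False
        show ?thesis
        proof (cases "x = Inr {z, w}")
          case True thus ?thesis using x uE zuw \<open>x \<noteq> Inl w\<close> unfolding r_def Y_def total_set_def by auto
        next
          case False thus ?thesis using x \<open>x \<noteq> Inl w\<close> unfolding r_def Y_def by auto
        qed
      qed
    qed
  next
    show "Y \<subseteq> r ` ?X"
    proof
      fix y assume y: "y \<in> Y"
      hence "r y = y" "y \<in> ?X" unfolding r_def Y_def by auto
      thus "y \<in> r ` ?X" by (metis image_eqI)
    qed
  qed
  have rinv: "r (total_act \<alpha> x) = r x" if x: "x \<in> ?X" for x
  proof (cases x)
    case (Inl t)
    then show ?thesis using u w by (auto simp: \<alpha>_def r_def)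
  next
    case (Inr e)
    hence "e \<in> E" using x unfolding total_set_def by auto
    then obtain t where t: "e = {z, t}" "t \<in> V" "t \<noteq> z" unfolding Ez by blast
    have az: "\<alpha> z = z" using \<alpha>z by simp
    have ae: "\<alpha> ` e = {z, \<alpha> t}" using t(1) az by simp
    show ?thesis
    proof (cases "t = u")
      case True
      have "\<alpha> t = w" using True by (simp add: \<alpha>_def)
      thus ?thesis using Inr ae True zuw t(1) by (simp add: r_def)
    next
      case False
      show ?thesis
      proof (cases "t = w")
        case True
        have "\<alpha> t = u" using True w by (simp add: \<alpha>_def)
        thus ?thesis using Inr ae True zuw t(1) by (simp add: r_def)
      next
        case False
        have at: "\<alpha> t = t" using False \<open>t \<noteq> u\<close> by (simp add: \<alpha>_def)
        have "{z, t} \<noteq> {z, w}" using False t(3) by (auto simp: doubleton_eq_iff)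
        thus ?thesis using Inr ae at t(1) by (simp add: r_def)
      qed
    qed
  qed
  show ?thesis
    unfolding theta_t_def cX[symmetric]
  proof (rule theta_ge[OF fX])
    fix k assume k1: "1 \<le> k" and k2: "k < card ?X - 1"
    define g where "g = (\<lambda>x. min (h (r x)) k)"
    have "g ` ?X = (\<lambda>i. min i k) ` (h ` (r ` ?X))" unfolding g_def by (simp add: image_image)
    also have "\<dots> = {1..k}" unfolding rY h by (rule min_image) (use k1 k2 cY in auto)
    finally have col: "coloring_with ?X g k" unfolding coloring_with_def .
    have "\<not> distinguishing V E total_act ?X g"
    proof
      assume "distinguishing V E total_act ?X g"
      moreover have "\<forall>x\<in>?X. g (total_act \<alpha> x) = g x" using rinv unfolding g_def by simp
      ultimately have "\<forall>v\<in>V. \<alpha> v = v" using A unfolding distinguishing_def by blast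
      hence "\<alpha> u = u" using u by blast
      thus False using w by (simp add: \<alpha>_def)
    qed
    thus "\<not> Pk V E total_act ?X k" using col unfolding Pk_def by blast
  qed
qed

theorem mainTheorem8:
  fixes V :: "'a set" and E :: "'a set set"
  assumes "simple_graph V E" and "connected_graph V E" and "card V \<ge> 3"
  shows "(\<forall>\<alpha>. automorphism V E \<alpha> \<longrightarrow> tcycles V E \<alpha> = vcycles V \<alpha> + ecycles E \<alpha>)
     \<and> theta_t V E \<le> theta_v V E + theta_e V E - 1
     \<and> theta_t V E \<le> card V + card E - 1
     \<and> (is_star V E \<longrightarrow> theta_t V E = card V + card E - 1)"
proof -
  have fV: "finite V" using assms(1) unfolding simple_graph_def by simp
  have fE: "finite E" using finE[OF assms(1)] .
  have up: "theta_t V E \<le> card V + card E - 1" using part_c_upper[OF assms] .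
  show ?thesis
    using part_a[OF fV fE] part_b[OF assms(1)] up star_lower[OF assms(1)]
    by (simp add: le_antisym)
qed

end
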